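(* Let $S$ be a Polish space and $(X_n),(Y_n)$ sequences of $S$-valued random variables with $X_n//_*Y_n\to1$. Then: (a) if $Y_n\xrightarrow{(d)}Y$, then $X_n\xrightarrow{(d)}Y$; (b) if $(g_n)$ is a sequence of continuous functions from $S$ into a Polish space $S'$, then $g_n(X_n)//_*g_n(Y_n)\to1$.
   Context: $\mathbb{P}_X$ denotes the law of $X$. Write $X_n//_*Y_n\to1$ if for every $\varepsilon>0$ there exist measurable sets $A_n^\varepsilon\subset S$ and measurable functions $f_n^\varepsilon:A_n^\varepsilon\to\mathbb{R}$ with $\mathbb{P}_{X_n}=f_n^\varepsilon\mathbb{P}_{Y_n}$ on $A_n^\varepsilon$ (i.e. $\mathbb{P}_{X_n}(B)=\int_Bf_n^\varepsilon d\mathbb{P}_{Y_n}$ for Borel $B\subset A_n^\varepsilon$), such that $\sup_{x\in A_n^\varepsilon}|f_n^\varepsilon(x)-1|\to0$ as $n\to\infty$ and $\mathbb{P}_{Y_n}(A_n^\varepsilon)\ge1-\varepsilon$ for $n$ large enough. *)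

theory Defs
  imports "HOL-Probability.Probability"
begin

definition law :: "'m measure \<Rightarrow> ('m \<Rightarrow> 'a::topological_space) \<Rightarrow> 'a measure" where
  "law M X = distr M borel X"

definition conv_distr :: "(nat \<Rightarrow> 'a::metric_space measure) \<Rightarrow> 'a measure \<Rightarrow> bool" where
  "conv_distr P P0 \<longleftrightarrow>
     (\<forall>h :: 'a \<Rightarrow> real. continuous_on UNIV h \<and> bounded (range h) \<longrightarrow>
        (\<lambda>n. integral\<^sup>L (P n) h) \<longlonglongrightarrow> integral\<^sup>L P0 h)"

text \<open>The relation  X_n //_* Y_n \<rightarrow> 1  stated for the laws P n = law of X_n, Q n = law of Y_n.\<close>
definition dens_close :: "(nat \<Rightarrow> 'a::topological_space measure) \<Rightarrow> (nat \<Rightarrow> 'a measure) \<Rightarrow> bool" where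
  "dens_close P Q \<longleftrightarrow>
     (\<forall>\<epsilon>>0. \<exists>(A :: nat \<Rightarrow> 'a set) (f :: nat \<Rightarrow> 'a \<Rightarrow> real).
        (\<forall>n. A n \<in> sets borel \<and> f n \<in> borel_measurable borel \<and>
              (\<forall>B \<in> sets borel. B \<subseteq> A n \<longrightarrow>
                  set_integrable (Q n) B (f n) \<and> measure (P n) B = (LINT x:B|Q n. f n x))) \<and>
        (\<forall>\<delta>>0. eventually (\<lambda>n. \<forall>x \<in> A n. \<bar>f n x - 1\<bar> \<le> \<delta>) sequentially) \<and>
        eventually (\<lambda>n. measure (Q n) (A n) \<ge> 1 - \<epsilon>) sequentially)"

end

theory Submission
  imports Defs
begin

lemma densities_exist:
  assumes P: "finite_measure P" and Q: "finite_measure Q" and sQ: "sets Q = sets P"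
  obtains L p q where "finite_measure L" "sets L = sets P"
    "p \<in> borel_measurable L" "q \<in> borel_measurable L" "\<And>x. 0 \<le> p x" "\<And>x. 0 \<le> q x"
    "density L (\<lambda>x. ennreal (p x)) = P" "density L (\<lambda>x. ennreal (q x)) = Q"
proof -
  define L where "L = sup_measure' P Q"
  have sL: "sets L = sets P" and spL: "space L = space P" using sQ by (auto simp: L_def)
  have le1: "emeasure P X \<le> emeasure L X" if "X \<in> sets P" for X
    unfolding L_def by (rule le_emeasure_sup_measure'1[OF sQ that])
  have le2: "emeasure Q X \<le> emeasure L X" if "X \<in> sets P" for X
    unfolding L_def by (rule le_emeasure_sup_measure'2[OF sQ that])
  have fin: "emeasure L (space L) \<noteq> \<infinity>"
  proof -
    have "emeasure L (space P) = (SUP Y\<in>sets P. emeasure P (space P \<inter> Y) + emeasure Q (space P \<inter> - Y))"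
      unfolding L_def by (rule emeasure_sup_measure'[OF sQ]) simp
    also have "\<dots> \<le> emeasure P (space P) + emeasure Q (space Q)"
    proof (rule SUP_least)
      fix Y assume Y: "Y \<in> sets P"
      have "emeasure P (space P \<inter> Y) \<le> emeasure P (space P)"
        by (rule emeasure_mono) auto
      moreover have "emeasure Q (space P \<inter> - Y) \<le> emeasure Q (space Q)"
          using sets_eq_imp_space_eq[OF sQ] sQ by (metis Int_lower1 emeasure_mono sets.top)
      ultimately show "emeasure P (space P \<inter> Y) + emeasure Q (space P \<inter> - Y) \<le> emeasure P (space P) + emeasure Q (space Q)"
        by (rule add_mono)
    qed
    also have "\<dots> < \<infinity>" using finite_measure.emeasure_finite[OF P] finite_measure.emeasure_finite[OF Q]
      by (simp add: less_top)
    finally show ?thesis using spL by simp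
  qed
  interpret L: finite_measure L using fin by (rule finite_measureI)
  have acP: "absolutely_continuous L P"
    unfolding absolutely_continuous_def
  proof
    fix X assume "X \<in> null_sets L"
    then show "X \<in> null_sets P" using le1[of X] sL by (auto simp: null_sets_def)
  qed
  have acQ: "absolutely_continuous L Q"
    unfolding absolutely_continuous_def
  proof
    fix X assume "X \<in> null_sets L"
    then show "X \<in> null_sets Q" using le2[of X] sL sQ by (auto simp: null_sets_def)
  qed
  have dP: "density L (RN_deriv L P) = P" using L.density_RN_deriv[OF acP] sL by simp
  have dQ: "density L (RN_deriv L Q) = Q" using L.density_RN_deriv[OF acQ] sL sQ by simp
  have fP: "AE x in L. RN_deriv L P x \<noteq> \<infinity>"
    using L.RN_deriv_finite[OF _ acP] sL P by (simp add: finite_measure.sigma_finite_measure)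
  have fQ: "AE x in L. RN_deriv L Q x \<noteq> \<infinity>"
    using L.RN_deriv_finite[OF _ acQ] sL sQ Q by (simp add: finite_measure.sigma_finite_measure)
  define p where "p x = enn2real (RN_deriv L P x)" for x
  define q where "q x = enn2real (RN_deriv L Q x)" for x
  have "density L (\<lambda>x. ennreal (p x)) = density L (RN_deriv L P)"
    unfolding p_def by (intro density_cong) (auto intro: AE_mp[OF fP] simp: less_top)
  moreover have "density L (\<lambda>x. ennreal (q x)) = density L (RN_deriv L Q)"
    unfolding q_def by (intro density_cong) (auto intro: AE_mp[OF fQ] simp: less_top)
  moreover have "p \<in> borel_measurable L" "q \<in> borel_measurable L" unfolding p_def q_def by auto
  ultimately show ?thesis
    using that[of L p q] L.finite_measure_axioms sL dP dQ by (auto simp: p_def q_def)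
qed

lemma dens_basic:
  assumes L: "finite_measure L" and pm[measurable]: "p \<in> borel_measurable L" and pn: "\<And>x. 0 \<le> p x"
    and fin: "finite_measure (density L (\<lambda>x. ennreal (p x)))"
  shows "integrable L p"
    and "\<And>B. B \<in> sets L \<Longrightarrow> measure (density L (\<lambda>x. ennreal (p x))) B = (LINT x:B|L. p x)"
    and "\<And>h. h \<in> borel_measurable L \<Longrightarrow> integral\<^sup>L (density L (\<lambda>x. ennreal (p x))) h = (\<integral>x. p x * h x \<partial>L)"
proof -
  interpret D: finite_measure "density L (\<lambda>x. ennreal (p x))" by (rule fin)
  have "integrable (density L (\<lambda>x. ennreal (p x))) (\<lambda>_. 1::real)" by simp
  then show "integrable L p" using integrable_density[of "\<lambda>_. 1::real" L p] pn by simp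
  show "integral\<^sup>L (density L (\<lambda>x. ennreal (p x))) h = (\<integral>x. p x * h x \<partial>L)" if "h \<in> borel_measurable L" for h
    using integral_density[of h L p] that pn by simp
  show "measure (density L (\<lambda>x. ennreal (p x))) B = (LINT x:B|L. p x)" if B: "B \<in> sets L" for B
  proof -
    have "measure (density L (\<lambda>x. ennreal (p x))) B = integral\<^sup>L (density L (\<lambda>x. ennreal (p x))) (indicator B)"
      using B by (simp add: integral_indicator Int_absorb2 sets.sets_into_space)
    also have "\<dots> = (\<integral>x. p x * indicator B x \<partial>L)"
      using integral_density[of "indicator B :: _ \<Rightarrow> real" L p] pn B by simp
    also have "\<dots> = (LINT x:B|L. p x)" by (simp add: set_lebesgue_integral_def mult.commute)
    finally show ?thesis .
  qed
qed

lemma l1_bound: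
  assumes L: "finite_measure L" and [measurable]: "p \<in> borel_measurable L" "q \<in> borel_measurable L"
    and pn: "\<And>x. 0 \<le> p x" and qn: "\<And>x. 0 \<le> q x"
    and finp: "finite_measure (density L (\<lambda>x. ennreal (p x)))"
    and finq: "finite_measure (density L (\<lambda>x. ennreal (q x)))"
    and tv: "\<forall>B\<in>sets L. \<bar>measure (density L (\<lambda>x. ennreal (p x))) B - measure (density L (\<lambda>x. ennreal (q x))) B\<bar> \<le> r"
  shows "(\<integral>x. \<bar>p x - q x\<bar> \<partial>L) \<le> 2 * r"
proof -
  note bp = dens_basic[OF L _ pn finp] and bq = dens_basic[OF L _ qn finq]
  have ip: "integrable L p" and iq: "integrable L q" using bp bq by auto
  define S where "S = {x\<in>space L. q x < p x}"
  define S' where "S' = space L - S"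
  have [measurable]: "S \<in> sets L" "S' \<in> sets L" unfolding S_def S'_def by measurable
  have e: "(\<integral>x. \<bar>p x - q x\<bar> \<partial>L) = (\<integral>x. indicator S x * p x - indicator S x * q x + (indicator S' x * q x - indicator S' x * p x) \<partial>L)"
    by (rule Bochner_Integration.integral_cong) (auto simp: S_def S'_def indicator_def)
  have iS: "integrable L (\<lambda>x. indicator A x * f x)" if "A \<in> sets L" "integrable L f" for A and f :: "_ \<Rightarrow> real"
    using integrable_mult_indicator[OF that] by simp
  have "(\<integral>x. \<bar>p x - q x\<bar> \<partial>L) = ((LINT x:S|L. p x) - (LINT x:S|L. q x)) + ((LINT x:S'|L. q x) - (LINT x:S'|L. p x))"
    unfolding e set_lebesgue_integral_def
    by (subst Bochner_Integration.integral_add Bochner_Integration.integral_diff, (auto intro!: iS ip iq Bochner_Integration.integrable_diff)[2])+ simp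
  also have "\<dots> \<le> r + r"
    using tv[rule_format, of S] tv[rule_format, of S'] bp(2)[of S] bq(2)[of S] bp(2)[of S'] bq(2)[of S']
    by (intro add_mono) auto
  finally show ?thesis by simp
qed

lemma tv_integral:
  assumes P: "finite_measure P" and Q: "finite_measure Q" and sQ: "sets Q = sets P"
    and tv: "\<forall>B\<in>sets P. \<bar>measure P B - measure Q B\<bar> \<le> r"
    and hm: "h \<in> borel_measurable P" and hb: "\<And>x. \<bar>h x\<bar> \<le> M"
  shows "\<bar>integral\<^sup>L P h - integral\<^sup>L Q h\<bar> \<le> M * (2 * r)"
proof -
  obtain L p q where L: "finite_measure L" "sets L = sets P"
    and [measurable]: "p \<in> borel_measurable L" "q \<in> borel_measurable L"
    and pn: "\<And>x. 0 \<le> p x" and qn: "\<And>x. 0 \<le> q x"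
    and dp: "density L (\<lambda>x. ennreal (p x)) = P" and dq: "density L (\<lambda>x. ennreal (q x)) = Q"
    using densities_exist[OF P Q sQ] by metis
  have hL[measurable]: "h \<in> borel_measurable L" using hm L(2) by (simp cong: measurable_cong_sets)
  have fP: "finite_measure (density L (\<lambda>x. ennreal (p x)))" using dp P by simp
  have fQ: "finite_measure (density L (\<lambda>x. ennreal (q x)))" using dq Q by simp
  have bp: "integrable L p" "\<And>h. h \<in> borel_measurable L \<Longrightarrow> integral\<^sup>L P h = (\<integral>x. p x * h x \<partial>L)"
    using dens_basic(1,3)[OF L(1) _ pn fP] dp by auto
  have bq: "integrable L q" "\<And>h. h \<in> borel_measurable L \<Longrightarrow> integral\<^sup>L Q h = (\<integral>x. q x * h x \<partial>L)"
    using dens_basic(1,3)[OF L(1) _ qn fQ] dq by auto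
  have M0: "0 \<le> M" using hb[of undefined] by linarith
  have ipq: "integrable L (\<lambda>x. p x - q x)" using bp(1) bq(1) by auto
  have ib: "integrable L (\<lambda>x. f x * h x)" if "integrable L f" "f \<in> borel_measurable L" for f
    by (rule Bochner_Integration.integrable_bound[of L "\<lambda>x. M * f x"])
       (use that hb M0 in \<open>auto intro!: AE_I2 simp: abs_mult mult.commute[of M] mult_left_mono\<close>)
  have iM: "integrable L (\<lambda>x. \<bar>p x - q x\<bar> * M)" using ipq by auto
  have ibp: "integrable L (\<lambda>x. (p x - q x) * h x)" by (rule ib[OF ipq]) measurable
  have "integral\<^sup>L P h - integral\<^sup>L Q h = (\<integral>x. p x * h x \<partial>L) - (\<integral>x. q x * h x \<partial>L)"
    using bp(2) bq(2) hL by simp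
  also have "\<dots> = (\<integral>x. (p x - q x) * h x \<partial>L)"
    using ib[OF bp(1)] ib[OF bq(1)] by (simp add: left_diff_distrib)
  finally have eqd: "integral\<^sup>L P h - integral\<^sup>L Q h = (\<integral>x. (p x - q x) * h x \<partial>L)" .
  have "\<bar>integral\<^sup>L P h - integral\<^sup>L Q h\<bar> \<le> (\<integral>x. \<bar>(p x - q x) * h x\<bar> \<partial>L)"
    unfolding eqd by (rule integral_abs_bound)
  also have "\<dots> \<le> (\<integral>x. \<bar>p x - q x\<bar> * M \<partial>L)"
    using Bochner_Integration.integrable_abs[OF ibp] iM hb M0 by (intro integral_mono) (auto simp: abs_mult intro!: mult_left_mono)
  also have "\<dots> = M * (\<integral>x. \<bar>p x - q x\<bar> \<partial>L)" by (simp add: mult.commute)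
  also have "\<dots> \<le> M * (2 * r)"
  proof (intro mult_left_mono M0 l1_bound[OF L(1) _ _ pn qn])
    show "finite_measure (density L (\<lambda>x. ennreal (p x)))" using dp P by simp
    show "finite_measure (density L (\<lambda>x. ennreal (q x)))" using dq Q by simp
    show "\<forall>B\<in>sets L. \<bar>measure (density L (\<lambda>x. ennreal (p x))) B - measure (density L (\<lambda>x. ennreal (q x))) B\<bar> \<le> r"
      using tv L(2) dp dq by simp
  qed auto
  finally show ?thesis .
qed

lemma dens_step:
  fixes P Q :: "'a::topological_space measure"
  assumes P: "prob_space P" and Q: "prob_space Q" and sP: "sets P = sets borel" and sQ: "sets Q = sets borel"
    and A: "A \<in> sets borel" and fm: "f \<in> borel_measurable borel"
    and rep: "\<forall>B \<in> sets borel. B \<subseteq> A \<longrightarrow> set_integrable Q B f \<and> measure P B = (LINT x:B|Q. f x)"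
    and fd: "\<forall>x\<in>A. \<bar>f x - 1\<bar> \<le> d" and d: "0 \<le> d" "d \<le> 1" and e: "0 \<le> e"
    and QA: "measure Q A \<ge> 1 - e"
    and B: "B \<in> sets borel"
  shows "\<bar>measure P B - measure Q B\<bar> \<le> 2 * d + 2 * e"
proof -
  interpret P: prob_space P by fact
  interpret Q: prob_space Q by fact
  have spP: "space P = UNIV" using sets_eq_imp_space_eq[OF sP] by simp
  have spQ: "space Q = UNIV" using sets_eq_imp_space_eq[OF sQ] by simp
  have bounds: "(1 - d) * measure Q C \<le> measure P C \<and> measure P C \<le> (1 + d) * measure Q C"
    if C: "C \<in> sets borel" "C \<subseteq> A" for C
  proof -
    have si: "set_integrable Q C f" and eq: "measure P C = (LINT x:C|Q. f x)" using rep C by auto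
    have sc: "set_integrable Q C (\<lambda>_. c)" for c :: real
      unfolding set_integrable_def using C sQ
      using Bochner_Integration.integrable_mult_indicator[of C Q "\<lambda>_. c"] C sQ by auto
    have cst: "(LINT x:C|Q. c) = c * measure Q C" for c :: real
      using C sQ spQ by (simp add: set_lebesgue_integral_def integral_indicator mult.commute)
    have "(LINT x:C|Q. (1 - d)) \<le> (LINT x:C|Q. f x)"
      apply (rule set_integral_mono[OF sc si]) using fd C(2) by (fastforce simp: abs_le_iff)
    moreover have "(LINT x:C|Q. f x) \<le> (LINT x:C|Q. (1 + d))"
      apply (rule set_integral_mono[OF si sc]) using fd C(2) by (fastforce simp: abs_le_iff)
    ultimately show ?thesis using eq cst by simp
  qed
  have BA: "B \<inter> A \<in> sets borel" "B - A \<in> sets borel" "UNIV - A \<in> sets borel" using A B by auto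
  have disj: "B \<inter> A \<inter> (B - A) = {}" by blast
  have dP: "measure P B = measure P (B \<inter> A) + measure P (B - A)"
    using P.finite_measure_Union[of "B \<inter> A" "B - A"] BA sP disj by (simp add: Un_Diff_Int Int_Diff_Un)
  have dQ: "measure Q B = measure Q (B \<inter> A) + measure Q (B - A)"
    using Q.finite_measure_Union[of "B \<inter> A" "B - A"] BA sQ disj by (simp add: Un_Diff_Int Int_Diff_Un)
  note b1 = bounds[OF BA(1)]
  have QBA: "measure Q (B \<inter> A) \<le> 1" using Q.prob_le_1 by simp
  have "measure P (B - A) \<le> measure P (UNIV - A)"
    using BA sP by (intro P.finite_measure_mono) auto
  also have "\<dots> = 1 - measure P A" using P.prob_compl[of A] A sP spP by simp
  also have "\<dots> \<le> 1 - (1 - d) * measure Q A" using bounds[OF A] by simp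
  also have "\<dots> \<le> 1 - (1 - d) * (1 - e)" using QA d by (simp add: mult_left_mono)
  also have "\<dots> \<le> d + e" using d e by (simp add: algebra_simps)
  finally have PBA: "measure P (B - A) \<le> d + e" .
  have "measure Q (B - A) \<le> measure Q (UNIV - A)"
    using BA sQ by (intro Q.finite_measure_mono) auto
  also have "\<dots> = 1 - measure Q A" using Q.prob_compl[of A] A sQ spQ by simp
  finally have QBA2: "measure Q (B - A) \<le> e" using QA by simp
  have "d * measure Q (B \<inter> A) \<le> d" using QBA d by (simp add: mult_left_le)
  moreover have "measure Q (B \<inter> A) - d * measure Q (B \<inter> A) \<le> measure P (B \<inter> A) \<and> measure P (B \<inter> A) \<le> measure Q (B \<inter> A) + d * measure Q (B \<inter> A)"
    using b1 by (simp add: algebra_simps)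
  ultimately show ?thesis
    unfolding abs_le_iff
    using dP dQ PBA QBA2 measure_nonneg[of P "B - A"] measure_nonneg[of Q "B - A"] measure_nonneg[of Q "B \<inter> A"]
    by linarith
qed

lemma dens_one:
  fixes p q :: "'a::topological_space \<Rightarrow> real"
  assumes L: "finite_measure L" and sL: "sets L = sets borel"
    and pm[measurable]: "p \<in> borel_measurable borel" and qm[measurable]: "q \<in> borel_measurable borel"
    and pn: "\<And>x. 0 \<le> p x" and qn: "\<And>x. 0 \<le> q x"
    and P: "prob_space (density L (\<lambda>x. ennreal (p x)))" and Q: "prob_space (density L (\<lambda>x. ennreal (q x)))"
    and eta: "0 < \<eta>" and T: "(\<integral>x. \<bar>p x - q x\<bar> \<partial>L) \<le> \<eta>^2"
  shows "{x. 0 < q x \<and> \<bar>p x / q x - 1\<bar> \<le> \<eta>} \<in> sets borel"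
    and "\<forall>B\<in>sets borel. B \<subseteq> {x. 0 < q x \<and> \<bar>p x / q x - 1\<bar> \<le> \<eta>} \<longrightarrow>
          set_integrable (density L (\<lambda>x. ennreal (q x))) B (\<lambda>x. p x / q x) \<and>
          measure (density L (\<lambda>x. ennreal (p x))) B = (LINT x:B|density L (\<lambda>x. ennreal (q x)). p x / q x)"
    and "measure (density L (\<lambda>x. ennreal (q x))) {x. 0 < q x \<and> \<bar>p x / q x - 1\<bar> \<le> \<eta>} \<ge> 1 - \<eta>"
proof -
  define A where "A = {x. 0 < q x \<and> \<bar>p x / q x - 1\<bar> \<le> \<eta>}"
  have spL: "space L = UNIV" using sets_eq_imp_space_eq[OF sL] by simp
  have pL[measurable]: "p \<in> borel_measurable L" and qL[measurable]: "q \<in> borel_measurable L"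
    using sL by (simp_all cong: measurable_cong_sets)
  have Ab[measurable]: "A \<in> sets borel" unfolding A_def by measurable
  then show "{x. 0 < q x \<and> \<bar>p x / q x - 1\<bar> \<le> \<eta>} \<in> sets borel" by (simp add: A_def)
  have fP: "finite_measure (density L (\<lambda>x. ennreal (p x)))" using P unfolding prob_space_def by blast
  have fQ: "finite_measure (density L (\<lambda>x. ennreal (q x)))" using Q unfolding prob_space_def by blast
  note bp = dens_basic[OF L pL pn fP] and bq = dens_basic[OF L qL qn fQ]
  show "\<forall>B\<in>sets borel. B \<subseteq> {x. 0 < q x \<and> \<bar>p x / q x - 1\<bar> \<le> \<eta>} \<longrightarrow>
          set_integrable (density L (\<lambda>x. ennreal (q x))) B (\<lambda>x. p x / q x) \<and>
          measure (density L (\<lambda>x. ennreal (p x))) B = (LINT x:B|density L (\<lambda>x. ennreal (q x)). p x / q x)"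
  proof (intro ballI impI)
    fix B :: "'a set" assume B[measurable]: "B \<in> sets borel" and BA: "B \<subseteq> {x. 0 < q x \<and> \<bar>p x / q x - 1\<bar> \<le> \<eta>}"
    have BL[measurable]: "B \<in> sets L" using B sL by simp
    have fm: "(\<lambda>x. indicator B x * p x / q x) \<in> borel_measurable L" by measurable
    have fe: "(\<lambda>x. q x *\<^sub>R (indicator B x *\<^sub>R (p x / q x))) = (\<lambda>x. indicator B x * p x)"
    proof
      fix x show "q x *\<^sub>R (indicator B x *\<^sub>R (p x / q x)) = indicator B x * p x"
        using BA by (cases "x \<in> B") auto
    qed
    have ii: "integrable L (\<lambda>x. indicator B x * p x)"
      using integrable_mult_indicator[OF BL bp(1)] by simp
    have "set_integrable (density L (\<lambda>x. ennreal (q x))) B (\<lambda>x. p x / q x)"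
      unfolding set_integrable_def
      by (subst integrable_density) (use qn ii fe in auto)
    moreover have "(LINT x:B|density L (\<lambda>x. ennreal (q x)). p x / q x) = (\<integral>x. indicator B x * p x \<partial>L)"
      unfolding set_lebesgue_integral_def
      by (subst integral_density) (use qn fe fm in auto)
    moreover have "measure (density L (\<lambda>x. ennreal (p x))) B = (\<integral>x. indicator B x * p x \<partial>L)"
      using bp(2)[OF BL] by (simp add: set_lebesgue_integral_def)
    ultimately show "set_integrable (density L (\<lambda>x. ennreal (q x))) B (\<lambda>x. p x / q x) \<and>
          measure (density L (\<lambda>x. ennreal (p x))) B = (LINT x:B|density L (\<lambda>x. ennreal (q x)). p x / q x)"
      by simp
  qed
  have CL: "UNIV - A \<in> sets L" using Ab sL by simp
  have ipq: "integrable L (\<lambda>x. \<bar>p x - q x\<bar> / \<eta>)" using bp(1) bq(1) by auto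
  have pw: "indicator (UNIV - A) x * q x \<le> \<bar>p x - q x\<bar> / \<eta>" for x
  proof (cases "x \<in> A")
    case True then show ?thesis using eta by simp
  next
    case False
    show ?thesis
    proof (cases "q x = 0")
      case True then show ?thesis using False eta by simp
    next
      case qp: False
      then have q0: "0 < q x" using qn[of x] by simp
      with False have "\<eta> < \<bar>p x / q x - 1\<bar>" by (auto simp: A_def)
      also have "\<bar>p x / q x - 1\<bar> = \<bar>p x - q x\<bar> / q x" using q0 by (simp add: field_simps)
      finally have "\<eta> * q x < \<bar>p x - q x\<bar>" using q0 by (simp add: field_simps)
      then show ?thesis using False eta by (simp add: field_simps)
    qed
  qed
  have "measure (density L (\<lambda>x. ennreal (q x))) (UNIV - A) = (\<integral>x. indicator (UNIV - A) x * q x \<partial>L)"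
    using bq(2)[OF CL] by (simp add: set_lebesgue_integral_def)
  also have "\<dots> \<le> (\<integral>x. \<bar>p x - q x\<bar> / \<eta> \<partial>L)"
    using integrable_mult_indicator[OF CL bq(1)] ipq pw by (intro integral_mono) auto
  also have "\<dots> = (\<integral>x. \<bar>p x - q x\<bar> \<partial>L) / \<eta>" by simp
  also have "\<dots> \<le> \<eta>^2 / \<eta>" using T eta by (intro divide_right_mono) auto
  also have "\<dots> = \<eta>" using eta by (simp add: power2_eq_square)
  finally have "measure (density L (\<lambda>x. ennreal (q x))) (UNIV - A) \<le> \<eta>" .
  moreover have "measure (density L (\<lambda>x. ennreal (q x))) (UNIV - A) = 1 - measure (density L (\<lambda>x. ennreal (q x))) A"
    using prob_space.prob_compl[OF Q, of A] Ab sL spL by simp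
  ultimately show "measure (density L (\<lambda>x. ennreal (q x))) {x. 0 < q x \<and> \<bar>p x / q x - 1\<bar> \<le> \<eta>} \<ge> 1 - \<eta>"
    by (simp add: A_def)
qed

lemma dens_to_tv:
  fixes P Q :: "nat \<Rightarrow> 'a::topological_space measure"
  assumes P: "\<And>n. prob_space (P n)" and Q: "\<And>n. prob_space (Q n)"
    and sP: "\<And>n. sets (P n) = sets borel" and sQ: "\<And>n. sets (Q n) = sets borel"
    and dc: "dens_close P Q"
  shows "\<forall>r>0. eventually (\<lambda>n. \<forall>B\<in>sets borel. \<bar>measure (P n) B - measure (Q n) B\<bar> \<le> r) sequentially"
proof (intro allI impI)
  fix r :: real assume r: "0 < r"
  from dc[unfolded dens_close_def, rule_format, of "r/4"] r obtain A f where
    h1: "\<forall>n. A n \<in> sets borel \<and> f n \<in> borel_measurable borel \<and>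
              (\<forall>B \<in> sets borel. B \<subseteq> A n \<longrightarrow>
                  set_integrable (Q n) B (f n) \<and> measure (P n) B = (LINT x:B|Q n. f n x))"
    and h2: "\<forall>\<delta>>0. eventually (\<lambda>n. \<forall>x \<in> A n. \<bar>f n x - 1\<bar> \<le> \<delta>) sequentially"
    and h3: "eventually (\<lambda>n. measure (Q n) (A n) \<ge> 1 - r/4) sequentially" by auto
  have h2': "eventually (\<lambda>n. \<forall>x \<in> A n. \<bar>f n x - 1\<bar> \<le> min (r/4) 1) sequentially" by (rule h2[rule_format]) (use r in simp)
  show "eventually (\<lambda>n. \<forall>B\<in>sets borel. \<bar>measure (P n) B - measure (Q n) B\<bar> \<le> r) sequentially"
    using h2' h3
  proof eventually_elim
    case (elim n)
    show ?case
    proof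
      fix B :: "'a set" assume B: "B \<in> sets borel"
      have "\<bar>measure (P n) B - measure (Q n) B\<bar> \<le> 2 * min (r/4) 1 + 2 * (r/4)"
        by (rule dens_step[OF P Q sP sQ]) (use h1 elim B r in auto)
      then show "\<bar>measure (P n) B - measure (Q n) B\<bar> \<le> r" by linarith
    qed
  qed
qed

lemma tv_to_dens:
  fixes P Q :: "nat \<Rightarrow> 'a::topological_space measure"
  assumes P: "\<And>n. prob_space (P n)" and Q: "\<And>n. prob_space (Q n)"
    and sP: "\<And>n. sets (P n) = sets borel" and sQ: "\<And>n. sets (Q n) = sets borel"
    and tv: "\<forall>r>0. eventually (\<lambda>n. \<forall>B\<in>sets borel. \<bar>measure (P n) B - measure (Q n) B\<bar> \<le> r) sequentially"
  shows "dens_close P Q"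
proof -
  have "\<forall>n. \<exists>LPQ. finite_measure (fst LPQ) \<and> sets (fst LPQ) = sets borel \<and>
      fst (snd LPQ) \<in> borel_measurable borel \<and> snd (snd LPQ) \<in> borel_measurable borel \<and>
      (\<forall>x. 0 \<le> fst (snd LPQ) x) \<and> (\<forall>x. 0 \<le> snd (snd LPQ) x) \<and>
      density (fst LPQ) (\<lambda>x. ennreal (fst (snd LPQ) x)) = P n \<and>
      density (fst LPQ) (\<lambda>x. ennreal (snd (snd LPQ) x)) = Q n"
  proof
    fix n
    have fP: "finite_measure (P n)" using P[of n] unfolding prob_space_def by blast
    have fQ: "finite_measure (Q n)" using Q[of n] unfolding prob_space_def by blast
    obtain L p q where "finite_measure L" "sets L = sets (P n)"
      "p \<in> borel_measurable L" "q \<in> borel_measurable L" "\<And>x. 0 \<le> p x" "\<And>x. 0 \<le> q x"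
      "density L (\<lambda>x. ennreal (p x)) = P n" "density L (\<lambda>x. ennreal (q x)) = Q n"
      using densities_exist[OF fP fQ] sP sQ by metis
    then show "\<exists>LPQ. finite_measure (fst LPQ) \<and> sets (fst LPQ) = sets borel \<and>
      fst (snd LPQ) \<in> borel_measurable borel \<and> snd (snd LPQ) \<in> borel_measurable borel \<and>
      (\<forall>x. 0 \<le> fst (snd LPQ) x) \<and> (\<forall>x. 0 \<le> snd (snd LPQ) x) \<and>
      density (fst LPQ) (\<lambda>x. ennreal (fst (snd LPQ) x)) = P n \<and>
      density (fst LPQ) (\<lambda>x. ennreal (snd (snd LPQ) x)) = Q n"
      using sP[of n] by (intro exI[of _ "(L,p,q)"]) (auto cong: measurable_cong_sets)
  qed
  from choice[OF this] obtain F where F: "\<And>n. finite_measure (fst (F n)) \<and> sets (fst (F n)) = sets borel \<and>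
      fst (snd (F n)) \<in> borel_measurable borel \<and> snd (snd (F n)) \<in> borel_measurable borel \<and>
      (\<forall>x. 0 \<le> fst (snd (F n)) x) \<and> (\<forall>x. 0 \<le> snd (snd (F n)) x) \<and>
      density (fst (F n)) (\<lambda>x. ennreal (fst (snd (F n)) x)) = P n \<and>
      density (fst (F n)) (\<lambda>x. ennreal (snd (snd (F n)) x)) = Q n" by blast
  define L where "L n = fst (F n)" for n
  define p where "p n = fst (snd (F n))" for n
  define q where "q n = snd (snd (F n))" for n
  have Lf: "\<And>n. finite_measure (L n)" and sL: "\<And>n. sets (L n) = sets borel"
    and pm: "\<And>n. p n \<in> borel_measurable borel" and qm: "\<And>n. q n \<in> borel_measurable borel"
    and pn: "\<And>n x. 0 \<le> p n x" and qn: "\<And>n x. 0 \<le> q n x"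
    and dp: "\<And>n. density (L n) (\<lambda>x. ennreal (p n x)) = P n"
    and dq: "\<And>n. density (L n) (\<lambda>x. ennreal (q n x)) = Q n"
    using F unfolding L_def p_def q_def by auto
  have pL: "\<And>n. p n \<in> borel_measurable (L n)" and qL: "\<And>n. q n \<in> borel_measurable (L n)"
    using pm qm sL by (simp_all cong: measurable_cong_sets)
  define T where "T n = (\<integral>x. \<bar>p n x - q n x\<bar> \<partial>L n)" for n
  have T0: "0 \<le> T n" for n unfolding T_def by simp
  have Tev: "eventually (\<lambda>n. T n \<le> r) sequentially" if r: "0 < r" for r
  proof -
    have "eventually (\<lambda>n. \<forall>B\<in>sets borel. \<bar>measure (P n) B - measure (Q n) B\<bar> \<le> r/2) sequentially"
      by (rule tv[rule_format]) (use r in simp)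
    then show ?thesis
    proof eventually_elim
      case (elim n)
      have fP: "finite_measure (P n)" using P[of n] unfolding prob_space_def by blast
      have fQ: "finite_measure (Q n)" using Q[of n] unfolding prob_space_def by blast
      have "T n \<le> 2 * (r/2)" unfolding T_def
        by (rule l1_bound[OF Lf pL qL pn qn]) (use dp dq fP fQ elim sL in auto)
      then show ?case by simp
    qed
  qed
  have Tlim: "T \<longlonglongrightarrow> 0"
    unfolding tendsto_iff
  proof (intro allI impI)
    fix r :: real assume "0 < r"
    then have "eventually (\<lambda>n. T n \<le> r/2) sequentially" by (intro Tev) simp
    then show "eventually (\<lambda>n. dist (T n) 0 < r) sequentially"
      by eventually_elim (use T0 \<open>0 < r\<close> in auto)
  qed
  define \<eta> where "\<eta> n = sqrt (T n + inverse (real (Suc n)))" for n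
  have eta0: "0 < \<eta> n" for n unfolding \<eta>_def using T0[of n] by (simp add: add_nonneg_pos)
  have etaT: "T n \<le> (\<eta> n)^2" for n unfolding \<eta>_def using T0[of n] by simp
  have etalim: "\<eta> \<longlonglongrightarrow> 0"
    unfolding \<eta>_def using tendsto_real_sqrt[OF tendsto_add[OF Tlim LIMSEQ_inverse_real_of_nat]] by simp
  have etaev: "eventually (\<lambda>n. \<eta> n < d) sequentially" if "0 < d" for d
    using etalim[unfolded tendsto_iff, rule_format, OF that] eta0
    by (auto elim!: eventually_mono)
  define A where "A n = {x. 0 < q n x \<and> \<bar>p n x / q n x - 1\<bar> \<le> \<eta> n}" for n
  define f where "f n x = p n x / q n x" for n x
  have PP: "prob_space (density (L n) (\<lambda>x. ennreal (p n x)))" for n using dp P by simp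
  have QQ: "prob_space (density (L n) (\<lambda>x. ennreal (q n x)))" for n using dq Q by simp
  note one = dens_one[OF Lf sL pm qm pn qn PP QQ eta0, OF etaT[unfolded T_def]]
  have C1: "\<forall>n. A n \<in> sets borel \<and> f n \<in> borel_measurable borel \<and>
              (\<forall>B \<in> sets borel. B \<subseteq> A n \<longrightarrow>
                  set_integrable (Q n) B (f n) \<and> measure (P n) B = (LINT x:B|Q n. f n x))"
  proof
    fix n
    have "f n \<in> borel_measurable borel" unfolding f_def using pm[of n] qm[of n] by measurable
    then show "A n \<in> sets borel \<and> f n \<in> borel_measurable borel \<and>
              (\<forall>B \<in> sets borel. B \<subseteq> A n \<longrightarrow>
                  set_integrable (Q n) B (f n) \<and> measure (P n) B = (LINT x:B|Q n. f n x))"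
      using one(1)[of n] one(2)[of n] dp[of n] dq[of n] unfolding A_def f_def by auto
  qed
  have C2: "\<forall>\<delta>>0. eventually (\<lambda>n. \<forall>x \<in> A n. \<bar>f n x - 1\<bar> \<le> \<delta>) sequentially"
  proof (intro allI impI)
    fix \<delta> :: real assume "0 < \<delta>"
    from etaev[OF this] show "eventually (\<lambda>n. \<forall>x \<in> A n. \<bar>f n x - 1\<bar> \<le> \<delta>) sequentially"
      by eventually_elim (auto simp: A_def f_def)
  qed
  have C3: "eventually (\<lambda>n. measure (Q n) (A n) \<ge> 1 - \<epsilon>) sequentially" if eps: "0 < \<epsilon>" for \<epsilon>
    using etaev[OF eps]
  proof eventually_elim
    case (elim n)
    then show ?case using one(3)[of n] dq[of n] unfolding A_def by simp
  qed
  show ?thesis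
    unfolding dens_close_def
  proof (intro allI impI)
    fix \<epsilon> :: real assume eps: "0 < \<epsilon>"
    show "\<exists>(A :: nat \<Rightarrow> 'a set) (f :: nat \<Rightarrow> 'a \<Rightarrow> real).
        (\<forall>n. A n \<in> sets borel \<and> f n \<in> borel_measurable borel \<and>
              (\<forall>B \<in> sets borel. B \<subseteq> A n \<longrightarrow>
                  set_integrable (Q n) B (f n) \<and> measure (P n) B = (LINT x:B|Q n. f n x))) \<and>
        (\<forall>\<delta>>0. eventually (\<lambda>n. \<forall>x \<in> A n. \<bar>f n x - 1\<bar> \<le> \<delta>) sequentially) \<and>
        eventually (\<lambda>n. measure (Q n) (A n) \<ge> 1 - \<epsilon>) sequentially"
      using C1 C2 C3[OF eps] by blast
  qed
qed

theorem lemma16: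
  fixes MX MY :: "nat \<Rightarrow> 'm measure"
    and X Y :: "nat \<Rightarrow> 'm \<Rightarrow> 'a::polish_space"
  assumes "\<And>n. prob_space (MX n)" and "\<And>n. prob_space (MY n)"
    and "\<And>n. X n \<in> borel_measurable (MX n)" and "\<And>n. Y n \<in> borel_measurable (MY n)"
    and "dens_close (\<lambda>n. law (MX n) (X n)) (\<lambda>n. law (MY n) (Y n))"
  shows "(\<forall>(N :: 'k measure) (Z :: 'k \<Rightarrow> 'a).
            prob_space N \<and> Z \<in> borel_measurable N \<and>
            conv_distr (\<lambda>n. law (MY n) (Y n)) (law N Z) \<longrightarrow>
            conv_distr (\<lambda>n. law (MX n) (X n)) (law N Z))
       \<and> (\<forall>g :: nat \<Rightarrow> 'a \<Rightarrow> 'b::polish_space.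
            (\<forall>n. continuous_on UNIV (g n)) \<longrightarrow>
            dens_close (\<lambda>n. law (MX n) (g n \<circ> X n)) (\<lambda>n. law (MY n) (g n \<circ> Y n)))"
proof -
  note MX = assms(1) and MY = assms(2) and Xm = assms(3) and Ym = assms(4)
  define PX where "PX n = law (MX n) (X n)" for n
  define PY where "PY n = law (MY n) (Y n)" for n
  have pX: "prob_space (PX n)" for n unfolding PX_def law_def by (rule prob_space.prob_space_distr[OF MX Xm])
  have pY: "prob_space (PY n)" for n unfolding PY_def law_def by (rule prob_space.prob_space_distr[OF MY Ym])
  have sX: "sets (PX n) = sets borel" for n unfolding PX_def law_def by simp
  have sY: "sets (PY n) = sets borel" for n unfolding PY_def law_def by simp
  have fX: "finite_measure (PX n)" for n using pX[of n] unfolding prob_space_def by blast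
  have fY: "finite_measure (PY n)" for n using pY[of n] unfolding prob_space_def by blast
  have TV: "\<forall>r>0. eventually (\<lambda>n. \<forall>B\<in>sets borel. \<bar>measure (PX n) B - measure (PY n) B\<bar> \<le> r) sequentially"
    by (rule dens_to_tv[OF pX pY sX sY]) (use assms(5) in \<open>simp add: PX_def PY_def\<close>)
  have partA: "conv_distr PX (law N Z)" if "conv_distr PY (law N Z)" for N :: "'k measure" and Z :: "'k \<Rightarrow> 'a"
    unfolding conv_distr_def
  proof (intro allI impI)
    fix h :: "'a \<Rightarrow> real" assume h: "continuous_on UNIV h \<and> bounded (range h)"
    have hm: "h \<in> borel_measurable borel" using h by (intro borel_measurable_continuous_onI) simp
    obtain M where M: "\<And>x. \<bar>h x\<bar> \<le> M" using h unfolding bounded_iff by auto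
    have M0: "0 \<le> M" using M[of undefined] by linarith
    have conv: "(\<lambda>n. integral\<^sup>L (PY n) h) \<longlonglongrightarrow> integral\<^sup>L (law N Z) h"
      using that h unfolding conv_distr_def by blast
    have diff: "(\<lambda>n. integral\<^sup>L (PX n) h - integral\<^sup>L (PY n) h) \<longlonglongrightarrow> 0"
      unfolding tendsto_iff
    proof (intro allI impI)
      fix e :: real assume e: "0 < e"
      define r where "r = e / (2 * (M + 1))"
      have r: "0 < r" unfolding r_def using e M0 by simp
      have Mr: "M * (2 * r) < e" unfolding r_def using e M0 by (simp add: field_simps)
      from TV[rule_format, OF r]
      show "eventually (\<lambda>n. dist (integral\<^sup>L (PX n) h - integral\<^sup>L (PY n) h) 0 < e) sequentially"
      proof eventually_elim
        case (elim n)
        have "\<bar>integral\<^sup>L (PX n) h - integral\<^sup>L (PY n) h\<bar> \<le> M * (2 * r)"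
          by (rule tv_integral[OF fX fY]) (use elim sX sY hm M in \<open>auto cong: measurable_cong_sets\<close>)
        then show ?case using Mr by simp
      qed
    qed
    have "(\<lambda>n. (integral\<^sup>L (PX n) h - integral\<^sup>L (PY n) h) + integral\<^sup>L (PY n) h) \<longlonglongrightarrow> 0 + integral\<^sup>L (law N Z) h"
      by (rule tendsto_add[OF diff conv])
    then show "(\<lambda>n. integral\<^sup>L (PX n) h) \<longlonglongrightarrow> integral\<^sup>L (law N Z) h" by simp
  qed
  have partB: "dens_close (\<lambda>n. law (MX n) (g n \<circ> X n)) (\<lambda>n. law (MY n) (g n \<circ> Y n))"
    if g: "\<forall>n. continuous_on UNIV (g n)" for g :: "nat \<Rightarrow> 'a \<Rightarrow> 'b::polish_space"
  proof -
    have gm: "g n \<in> borel_measurable borel" for n using g by (intro borel_measurable_continuous_onI) simp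
    have eX: "law (MX n) (g n \<circ> X n) = distr (PX n) borel (g n)" for n
      unfolding PX_def law_def by (rule distr_distr[OF gm Xm, symmetric])
    have eY: "law (MY n) (g n \<circ> Y n) = distr (PY n) borel (g n)" for n
      unfolding PY_def law_def by (rule distr_distr[OF gm Ym, symmetric])
    have gX: "g n \<in> measurable (PX n) borel" for n using gm sX by (simp cong: measurable_cong_sets)
    have gY: "g n \<in> measurable (PY n) borel" for n using gm sY by (simp cong: measurable_cong_sets)
    have spX: "space (PX n) = UNIV" for n using sets_eq_imp_space_eq[OF sX[of n]] by simp
    have spY: "space (PY n) = UNIV" for n using sets_eq_imp_space_eq[OF sY[of n]] by simp
    show ?thesis unfolding eX eY
    proof (rule tv_to_dens)
      show "prob_space (distr (PX n) borel (g n))" for n by (rule prob_space.prob_space_distr[OF pX gX])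
      show "prob_space (distr (PY n) borel (g n))" for n by (rule prob_space.prob_space_distr[OF pY gY])
      show "sets (distr (PX n) borel (g n)) = sets borel" for n by simp
      show "sets (distr (PY n) borel (g n)) = sets borel" for n by simp
      show "\<forall>r>0. eventually (\<lambda>n. \<forall>B\<in>sets borel. \<bar>measure (distr (PX n) borel (g n)) B - measure (distr (PY n) borel (g n)) B\<bar> \<le> r) sequentially"
      proof (intro allI impI)
        fix r :: real assume "0 < r"
        from TV[rule_format, OF this]
        show "eventually (\<lambda>n. \<forall>B\<in>sets borel. \<bar>measure (distr (PX n) borel (g n)) B - measure (distr (PY n) borel (g n)) B\<bar> \<le> r) sequentially"
        proof eventually_elim
          case (elim n)
          show ?case
          proof
            fix B :: "'b set" assume B: "B \<in> sets borel"
            have pre: "g n -` B \<in> sets borel" using measurable_sets[OF gm B] by simp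
            show "\<bar>measure (distr (PX n) borel (g n)) B - measure (distr (PY n) borel (g n)) B\<bar> \<le> r"
              using elim pre measure_distr[OF gX B] measure_distr[OF gY B] spX spY by simp
          qed
        qed
      qed
    qed
  qed
  show ?thesis using partA partB unfolding PX_def PY_def by blast
qed

end
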